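(* Let $A=(a_{ij})_{i,j\in I}$ be a Borcherds–Cartan matrix and $\tilde A$ the associated generalized Cartan matrix. If $A$ is symmetrizable, then so is $\tilde A$.
   Context: $I$ is a countable set; $A$ is a Borcherds–Cartan matrix: $a_{ii}=2$ or $a_{ii}\in\mathbb Z_{\le0}$; $a_{ij}\in\mathbb Z_{\le0}$ for $i\neq j$; $a_{ij}=0\iff a_{ji}=0$ for $i\ne j$. $I^{re}=\{i:a_{ii}=2\}$, $I^{im}=I\setminus I^{re}$. A matrix $M$ indexed by a set $J$ is symmetrizable if there is a diagonal matrix $D=\mathrm{diag}(d_j)_{j\in J}$ with $d_j\in\mathbb Z_{>0}$ such that $DM$ is symmetric. $\tilde I=\{(i,1)\}_{i\in I^{re}}\sqcup\{(i,m)\}_{i\in I^{im},m\in\mathbb Z_{\ge1}}$ and $\tilde A=(\tilde a_{(i,m),(j,n)})_{(i,m),(j,n)\in\tilde I}$ with $\tilde a_{(i,m),(i,m)}=2$ and $\tilde a_{(i,m),(j,n)}=a_{ij}$ for $(i,m)\neq(j,n)$. *)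

theory Defs
  imports Main "HOL-Library.Countable_Set"
begin

text \<open>Matrices indexed by a set J are functions J -> J -> int (values outside J irrelevant).\<close>

definition borcherds_cartan :: "'i set \<Rightarrow> ('i \<Rightarrow> 'i \<Rightarrow> int) \<Rightarrow> bool" where
  "borcherds_cartan I A \<longleftrightarrow>
     (\<forall>i\<in>I. A i i = 2 \<or> A i i \<le> 0) \<and>
     (\<forall>i\<in>I. \<forall>j\<in>I. i \<noteq> j \<longrightarrow> A i j \<le> 0) \<and>
     (\<forall>i\<in>I. \<forall>j\<in>I. i \<noteq> j \<longrightarrow> (A i j = 0 \<longleftrightarrow> A j i = 0))"

definition I_re :: "'i set \<Rightarrow> ('i \<Rightarrow> 'i \<Rightarrow> int) \<Rightarrow> 'i set" where
  "I_re I A = {i\<in>I. A i i = 2}"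

definition I_im :: "'i set \<Rightarrow> ('i \<Rightarrow> 'i \<Rightarrow> int) \<Rightarrow> 'i set" where
  "I_im I A = I - I_re I A"

definition symmetrizable :: "'j set \<Rightarrow> ('j \<Rightarrow> 'j \<Rightarrow> int) \<Rightarrow> bool" where
  "symmetrizable J M \<longleftrightarrow>
     (\<exists>d :: 'j \<Rightarrow> int. (\<forall>j\<in>J. d j > 0) \<and>
        (\<forall>i\<in>J. \<forall>j\<in>J. d i * M i j = d j * M j i))"

definition tilde_I :: "'i set \<Rightarrow> ('i \<Rightarrow> 'i \<Rightarrow> int) \<Rightarrow> ('i \<times> nat) set" where
  "tilde_I I A = {(i, 1) | i. i \<in> I_re I A} \<union> {(i, m) | i m. i \<in> I_im I A \<and> m \<ge> 1}"

definition tilde_A :: "('i \<Rightarrow> 'i \<Rightarrow> int) \<Rightarrow> ('i \<times> nat) \<Rightarrow> ('i \<times> nat) \<Rightarrow> int" where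
  "tilde_A A p q = (if p = q then 2 else A (fst p) (fst q))"

end

theory Submission
  imports Defs
begin

theorem lemma4p1p1:
  fixes I :: "'i set" and A :: "'i \<Rightarrow> 'i \<Rightarrow> int"
  assumes "countable I"
    and "borcherds_cartan I A"
    and "symmetrizable I A"
  shows "symmetrizable (tilde_I I A) (tilde_A A)"
proof -
  obtain d where d: "\<forall>j\<in>I. d j > 0" "\<forall>i\<in>I. \<forall>j\<in>I. d i * A i j = d j * A j i"
    using assms(3) unfolding symmetrizable_def by blast
  have sub: "fst ` tilde_I I A \<subseteq> I"
    unfolding tilde_I_def I_re_def I_im_def by auto
  show ?thesis
    unfolding symmetrizable_def
  proof (intro exI[of _ "\<lambda>p. d (fst p)"] conjI ballI)
    fix p assume "p \<in> tilde_I I A" then show "d (fst p) > 0" using sub d(1) by blast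
  next
    fix p q assume p: "p \<in> tilde_I I A" and q: "q \<in> tilde_I I A"
    have "fst p \<in> I" "fst q \<in> I" using p q sub by auto
    then show "d (fst p) * tilde_A A p q = d (fst q) * tilde_A A q p"
      using d(2) unfolding tilde_A_def by auto
  qed
qed

end
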